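(* Let an explicit non-confluent Runge--Kutta method $(A,b)$ with step-size coefficient $\gamma(A,b)$ be given. Then the time-step restriction $$0\le\Delta t\,\frac{q_k(u,t)}{\Delta x}\le\gamma(A,b)\quad\text{for all }k,u,t$$ is sharp: it guarantees nonnegativity of the numerical solution for every problem of the form $u_k'=q_k(u,t)(u_{k-1}-u_k)/\Delta x$ ($k=1,\dots,N$, $u_0:=u_N$) with nonnegative initial data and nonnegative $q_k$, and for every $\tilde\gamma>\gamma(A,b)$ the restriction $0\le\Delta t\,q_k(u,t)/\Delta x\le\tilde\gamma$ does not guarantee nonnegativity of the numerical solution for all such problems.
   Context: An $m$-stage explicit Runge--Kutta method is given by strictly lower-triangular $A=(a_{ij})\in\mathbb{R}^{m\times m}$ and $b\in\mathbb{R}^m$, nodes $c_i=\sum_ja_{ij}$; non-confluent means the $c_i$ are pairwise distinct. Applied to the ODE system with step $\Delta t$: $y^i_k=u^n_k+\sum_{j<i}a_{ij}\xi^j_k(y^j_{k-1}-y^j_k)$, $u^{n+1}_k=u^n_k+\sum_ib_i\xi^i_k(y^i_{k-1}-y^i_k)$, $\xi^j_k=\frac{\Delta t}{\Delta x}q_k(y^j,t_n+c_j\Delta t)$, periodic indices. Treating the $\xi^j_\ell$ as independent variables on the grid $\ell\in\mathbb{Z}$, $u^{n+1}_k=\sum_{i=0}^mP_i(\xi)u^n_{k-i}$ for polynomials $P_i$ (independent of $k$) in the $m(m+1)/2$ variables $\xi^j_\ell$, $1\le j\le m$, $k-(m-j)\le\ell\le k$. The step-size coefficient is $\gamma(A,b)=\sup\{\delta\ge0:P_i(\xi)\ge0\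 \forall i,\ \forall\xi\in[0,\delta]^{m(m+1)/2}\}$ (or $0$ if empty). *)

theory Defs
  imports Complex_Main "HOL-Library.Extended_Real"
begin

text \<open>An m-stage explicit Runge-Kutta method: stages are numbered 1..m,
  A :: nat => nat => real gives a_ij, b :: nat => real gives b_i.\<close>

definition rk_node :: "nat \<Rightarrow> (nat \<Rightarrow> nat \<Rightarrow> real) \<Rightarrow> nat \<Rightarrow> real" where
  "rk_node m A i = (\<Sum>j\<in>{1..m}. A i j)"

definition explicit_rk :: "nat \<Rightarrow> (nat \<Rightarrow> nat \<Rightarrow> real) \<Rightarrow> bool" where
  "explicit_rk m A \<longleftrightarrow> (\<forall>i\<in>{1..m}. \<forall>j\<in>{1..m}. i \<le> j \<longrightarrow> A i j = 0)"

definition non_confluent :: "nat \<Rightarrow> (nat \<Rightarrow> nat \<Rightarrow> real) \<Rightarrow> bool" where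
  "non_confluent m A \<longleftrightarrow> inj_on (rk_node m A) {1..m}"

text \<open>xi j l = the variable xi^j_l; u :: int => real is the grid function u^n.
  ist A xi u i = list of the stage functions y^1,...,y^i.\<close>

primrec ist :: "(nat \<Rightarrow> nat \<Rightarrow> real) \<Rightarrow> (nat \<Rightarrow> int \<Rightarrow> real) \<Rightarrow> (int \<Rightarrow> real)
    \<Rightarrow> nat \<Rightarrow> (int \<Rightarrow> real) list" where
  "ist A xi u 0 = []"
| "ist A xi u (Suc i) = ist A xi u i @
     [\<lambda>k. u k + (\<Sum>j\<in>{1..i}. A (Suc i) j * xi j k *
          ((ist A xi u i ! (j-1)) (k-1) - (ist A xi u i ! (j-1)) k))]"

definition iout :: "nat \<Rightarrow> (nat \<Rightarrow> nat \<Rightarrow> real) \<Rightarrow> (nat \<Rightarrow> real) \<Rightarrow> (nat \<Rightarrow> int \<Rightarrow> real)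
    \<Rightarrow> (int \<Rightarrow> real) \<Rightarrow> int \<Rightarrow> real" where
  "iout m A b xi u k = u k + (\<Sum>i\<in>{1..m}. b i * xi i k *
      ((ist A xi u m ! (i-1)) (k-1) - (ist A xi u m ! (i-1)) k))"

text \<open>P_i(xi): the coefficient of u^n_{k-i} in u^{n+1}_k (taken at k = 0,
  the P_i being independent of k).\<close>

definition rkP :: "nat \<Rightarrow> (nat \<Rightarrow> nat \<Rightarrow> real) \<Rightarrow> (nat \<Rightarrow> real) \<Rightarrow> nat
    \<Rightarrow> (nat \<Rightarrow> int \<Rightarrow> real) \<Rightarrow> real" where
  "rkP m A b i xi = iout m A b xi (\<lambda>l. if l = - int i then 1 else 0) 0"

definition gamma_ok :: "nat \<Rightarrow> (nat \<Rightarrow> nat \<Rightarrow> real) \<Rightarrow> (nat \<Rightarrow> real) \<Rightarrow> real \<Rightarrow> bool" where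
  "gamma_ok m A b \<delta> \<longleftrightarrow> \<delta> \<ge> 0 \<and>
     (\<forall>xi. (\<forall>j l. 1 \<le> j \<and> j \<le> m \<and> - int (m - j) \<le> l \<and> l \<le> 0
                  \<longrightarrow> 0 \<le> xi j l \<and> xi j l \<le> \<delta>)
        \<longrightarrow> (\<forall>i\<le>m. rkP m A b i xi \<ge> 0))"

text \<open>Step-size coefficient (may be +infinity, hence ereal).\<close>

definition rk_gamma :: "nat \<Rightarrow> (nat \<Rightarrow> nat \<Rightarrow> real) \<Rightarrow> (nat \<Rightarrow> real) \<Rightarrow> ereal" where
  "rk_gamma m A b = (if {\<delta>. gamma_ok m A b \<delta>} = {} then 0
                     else Sup (ereal ` {\<delta>. gamma_ok m A b \<delta>}))"

text \<open>Grid vectors are real lists of length N, indices 0..N-1 (k = 0 plays the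
  role of the paper's k = N, so the periodic predecessor of 0 is N-1).\<close>

definition pred_idx :: "nat \<Rightarrow> nat \<Rightarrow> nat" where
  "pred_idx N k = (if k = 0 then N - 1 else k - 1)"

primrec pst :: "nat \<Rightarrow> (nat \<Rightarrow> nat \<Rightarrow> real) \<Rightarrow> nat \<Rightarrow> (nat \<Rightarrow> real list \<Rightarrow> real \<Rightarrow> real)
    \<Rightarrow> real \<Rightarrow> real \<Rightarrow> real \<Rightarrow> real list \<Rightarrow> nat \<Rightarrow> real list list" where
  "pst m A N q dt dx t u 0 = []"
| "pst m A N q dt dx t u (Suc i) = pst m A N q dt dx t u i @
     [map (\<lambda>k. u ! k + (\<Sum>j\<in>{1..i}. A (Suc i) j *
            (dt / dx * q k (pst m A N q dt dx t u i ! (j-1)) (t + rk_node m A j * dt)) *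
            (pst m A N q dt dx t u i ! (j-1) ! pred_idx N k - pst m A N q dt dx t u i ! (j-1) ! k)))
        [0..<N]]"

definition rk_step :: "nat \<Rightarrow> (nat \<Rightarrow> nat \<Rightarrow> real) \<Rightarrow> (nat \<Rightarrow> real) \<Rightarrow> nat
    \<Rightarrow> (nat \<Rightarrow> real list \<Rightarrow> real \<Rightarrow> real) \<Rightarrow> real \<Rightarrow> real \<Rightarrow> real \<Rightarrow> real list \<Rightarrow> real list" where
  "rk_step m A b N q dt dx t u =
     (let Y = pst m A N q dt dx t u m in
      map (\<lambda>k. u ! k + (\<Sum>i\<in>{1..m}. b i *
            (dt / dx * q k (Y ! (i-1)) (t + rk_node m A i * dt)) *
            (Y ! (i-1) ! pred_idx N k - Y ! (i-1) ! k))) [0..<N])"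

primrec rk_sol :: "nat \<Rightarrow> (nat \<Rightarrow> nat \<Rightarrow> real) \<Rightarrow> (nat \<Rightarrow> real) \<Rightarrow> nat
    \<Rightarrow> (nat \<Rightarrow> real list \<Rightarrow> real \<Rightarrow> real) \<Rightarrow> real \<Rightarrow> real \<Rightarrow> real list \<Rightarrow> nat \<Rightarrow> real list" where
  "rk_sol m A b N q dt dx u0 0 = u0"
| "rk_sol m A b N q dt dx u0 (Suc n) =
     rk_step m A b N q dt dx (real n * dt) (rk_sol m A b N q dt dx u0 n)"

definition admissible :: "nat \<Rightarrow> (nat \<Rightarrow> real list \<Rightarrow> real \<Rightarrow> real) \<Rightarrow> real \<Rightarrow> real \<Rightarrow> ereal \<Rightarrow> bool" where
  "admissible N q dt dx g \<longleftrightarrow> N \<ge> 1 \<and> dt > 0 \<and> dx > 0 \<and>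
     (\<forall>k<N. \<forall>u t. length u = N \<longrightarrow>
        0 \<le> q k u t \<and> 0 \<le> dt * q k u t / dx \<and> ereal (dt * q k u t / dx) \<le> g)"

end

theory Submission
  imports Defs
begin



definition G :: "(nat \<Rightarrow> nat \<Rightarrow> real) \<Rightarrow> (nat \<Rightarrow> int \<Rightarrow> real) \<Rightarrow> (int \<Rightarrow> real) \<Rightarrow> nat \<Rightarrow> int \<Rightarrow> real" where
  "G A xi u s = ist A xi u (Suc s) ! s"

lemma ist_len[simp]: "length (ist A xi u i) = i"
  by (induction i) auto

lemma ist_prefix: "s < i \<Longrightarrow> ist A xi u i ! s = G A xi u s"
proof (induction i)
  case 0 then show ?case by simp
next
  case (Suc i)
  show ?case
  proof (cases "s < i")
    case True then show ?thesis using Suc by (simp add: nth_append)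
  next
    case False then have "s = i" using Suc by simp
    then show ?thesis by (simp add: G_def)
  qed
qed

lemma G_rec: "G A xi u s k = u k + (\<Sum>j\<in>{1..s}. A (Suc s) j * xi j k *
          (G A xi u (j-1) (k-1) - G A xi u (j-1) k))"
proof -
  have "G A xi u s k = u k + (\<Sum>j\<in>{1..s}. A (Suc s) j * xi j k *
          ((ist A xi u s ! (j-1)) (k-1) - (ist A xi u s ! (j-1)) k))"
    by (simp add: G_def nth_append)
  also have "\<dots> = u k + (\<Sum>j\<in>{1..s}. A (Suc s) j * xi j k *
          (G A xi u (j-1) (k-1) - G A xi u (j-1) k))"
    by (intro arg_cong2[where f="(+)"] refl sum.cong) (auto simp: ist_prefix)
  finally show ?thesis .
qed

lemma iout_G: "iout m A b xi u k = u k + (\<Sum>i\<in>{1..m}. b i * xi i k *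
      (G A xi u (i-1) (k-1) - G A xi u (i-1) k))"
  unfolding iout_def
  by (intro arg_cong2[where f="(+)"] refl sum.cong) (auto simp: ist_prefix)

lemma G_shift: "G A (\<lambda>j l. xi j (l + c)) (\<lambda>l. u (l + c)) s k = G A xi u s (k + c)"
proof (induction s arbitrary: k rule: less_induct)
  case (less s)
  show ?case
    unfolding G_rec[of A "\<lambda>j l. xi j (l + c)" "\<lambda>l. u (l + c)" s k] G_rec[of A xi u s "k+c"]
    apply (intro arg_cong2[where f="(+)"] refl sum.cong)
    using less by (auto simp: algebra_simps)
qed

lemma iout_shift: "iout m A b (\<lambda>j l. xi j (l + c)) (\<lambda>l. u (l + c)) k = iout m A b xi u (k + c)"
  unfolding iout_G
  by (intro arg_cong2[where f="(+)"] refl sum.cong) (auto simp: G_shift algebra_simps)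

lemma G_lin: "finite P \<Longrightarrow> G A xi (\<lambda>l. \<Sum>p\<in>P. a p * f p l) s k = (\<Sum>p\<in>P. a p * G A xi (f p) s k)"
proof (induction s arbitrary: k rule: less_induct)
  case (less s)
  have "G A xi (\<lambda>l. \<Sum>p\<in>P. a p * f p l) s k = (\<Sum>p\<in>P. a p * f p k) + (\<Sum>j\<in>{1..s}. A (Suc s) j * xi j k *
          ((\<Sum>p\<in>P. a p * G A xi (f p) (j-1) (k-1)) - (\<Sum>p\<in>P. a p * G A xi (f p) (j-1) k)))"
    unfolding G_rec[of A xi "\<lambda>l. \<Sum>p\<in>P. a p * f p l" s k]
    apply (intro arg_cong2[where f="(+)"] refl sum.cong)
    using less by auto
  also have "\<dots> = (\<Sum>p\<in>P. a p * f p k) + (\<Sum>j\<in>{1..s}. \<Sum>p\<in>P. a p * (A (Suc s) j * xi j k *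
          (G A xi (f p) (j-1) (k-1) - G A xi (f p) (j-1) k)))"
    by (simp add: sum_subtractf[symmetric] sum_distrib_left algebra_simps)
  also have "\<dots> = (\<Sum>p\<in>P. a p * G A xi (f p) s k)"
    apply (subst sum.swap)
    unfolding G_rec[of A xi "f _" s k]
    by (simp add: sum.distrib sum_distrib_left algebra_simps)
  finally show ?case .
qed

lemma iout_lin: "finite P \<Longrightarrow> iout m A b xi (\<lambda>l. \<Sum>p\<in>P. a p * f p l) k = (\<Sum>p\<in>P. a p * iout m A b xi (f p) k)"
  unfolding iout_G
  apply (simp add: G_lin sum_subtractf[symmetric] sum_distrib_left sum.distrib)
  apply (subst sum.swap)
  by (simp add: sum_distrib_left algebra_simps sum.distrib)

lemma G_local:
  "(\<forall>l. k - int s \<le> l \<and> l \<le> k \<longrightarrow> u l = v l) \<Longrightarrow>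
   (\<forall>j l. 1 \<le> j \<and> j \<le> s \<and> k - int (s - j) \<le> l \<and> l \<le> k \<longrightarrow> xi j l = xi' j l) \<Longrightarrow>
   G A xi u s k = G A xi' v s k"
proof (induction s arbitrary: k rule: less_induct)
  case (less s)
  show ?case
    unfolding G_rec[of A xi u s k] G_rec[of A xi' v s k]
    apply (intro arg_cong2[where f="(+)"] sum.cong refl)
    subgoal using less.prems by auto
    subgoal for j
      apply (subgoal_tac "xi j k = xi' j k")
      apply (subgoal_tac "G A xi u (j-1) (k-1) = G A xi' v (j-1) (k-1)")
      apply (subgoal_tac "G A xi u (j-1) k = G A xi' v (j-1) k")
      apply simp
      subgoal apply (rule less.IH) using less.prems by auto
      subgoal apply (rule less.IH) using less.prems by auto
      subgoal using less.prems by auto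
      done
    done
qed

lemma iout_local:
  "(\<forall>l. k - int m \<le> l \<and> l \<le> k \<longrightarrow> u l = v l) \<Longrightarrow>
   (\<forall>j l. 1 \<le> j \<and> j \<le> m \<and> k - int (m - j) \<le> l \<and> l \<le> k \<longrightarrow> xi j l = xi' j l) \<Longrightarrow>
   iout m A b xi u k = iout m A b xi' v k"
  unfolding iout_G
  apply (intro arg_cong2[where f="(+)"] sum.cong refl)
  subgoal by auto
  subgoal for i
      apply (subgoal_tac "xi i k = xi' i k")
      apply (subgoal_tac "G A xi u (i-1) (k-1) = G A xi' v (i-1) (k-1)")
      apply (subgoal_tac "G A xi u (i-1) k = G A xi' v (i-1) k")
      apply simp
      subgoal by (rule G_local) auto
      subgoal by (rule G_local) auto
      subgoal by auto
      done
  done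




lemma iout_decomp:
  "iout m A b xi u k = (\<Sum>p\<in>{0..m}. u (k - int p) * rkP m A b p (\<lambda>j l. xi j (l + k)))"
proof -
  define e where "e = (\<lambda>(c::int) (l::int). if l = c then (1::real) else 0)"
  define w where "w = (\<lambda>l. \<Sum>p\<in>{0..m}. u (k - int p) * e (k - int p) l)"
  have "\<forall>l. k - int m \<le> l \<and> l \<le> k \<longrightarrow> u l = w l"
  proof (intro allI impI)
    fix l assume l: "k - int m \<le> l \<and> l \<le> k"
    have "w l = (\<Sum>p\<in>{0..m}. if p = nat (k - l) then u l else 0)"
      unfolding w_def e_def by (intro sum.cong refl) (use l in auto)
    also have "\<dots> = u l" using l by (simp add: sum.delta nat_le_iff)
    finally show "u l = w l" by simp
  qed
  then have "iout m A b xi u k = iout m A b xi w k"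
    by (intro iout_local) auto
  also have "\<dots> = (\<Sum>p\<in>{0..m}. u (k - int p) * iout m A b xi (e (k - int p)) k)"
    unfolding w_def by (rule iout_lin) simp
  also have "\<dots> = (\<Sum>p\<in>{0..m}. u (k - int p) * rkP m A b p (\<lambda>j l. xi j (l + k)))"
  proof (intro sum.cong refl arg_cong2[where f="(*)"])
    fix p
    have "iout m A b xi (e (k - int p)) k = iout m A b xi (e (k - int p)) (0 + k)" by simp
    also have "\<dots> = iout m A b (\<lambda>j l. xi j (l + k)) (\<lambda>l. e (k - int p) (l + k)) 0"
      by (rule iout_shift[symmetric])
    also have "(\<lambda>l. e (k - int p) (l + k)) = (\<lambda>l. if l = - int p then 1 else 0)"
      unfolding e_def by auto
    finally show "iout m A b xi (e (k - int p)) k = rkP m A b p (\<lambda>j l. xi j (l + k))"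
      unfolding rkP_def .
  qed
  finally show ?thesis .
qed

lemma G_cont: "isCont (\<lambda>c. G A (\<lambda>j l. c * xi j l) u s k) x"
proof (induction s arbitrary: k rule: less_induct)
  case (less s)
  show ?case
    apply (subst G_rec[abs_def])
    apply (intro continuous_intros)
    using less by auto
qed

lemma rkP_cont: "isCont (\<lambda>c. rkP m A b i (\<lambda>j l. c * xi j l)) x"
  unfolding rkP_def iout_G
  by (intro continuous_intros G_cont)

lemma gamma_ok_mono:
  assumes ok: "gamma_ok m A b d" and d': "0 \<le> d'" "d' \<le> d" shows "gamma_ok m A b d'"
proof -
  show ?thesis unfolding gamma_ok_def
  proof (intro conjI d'(1) allI impI)
    fix xi i assume box: "\<forall>j l. 1 \<le> j \<and> j \<le> m \<and> - int (m - j) \<le> l \<and> l \<le> 0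
                  \<longrightarrow> 0 \<le> xi j l \<and> xi j l \<le> d'" and i: "i \<le> m"
    have "\<forall>j l. 1 \<le> j \<and> j \<le> m \<and> - int (m - j) \<le> l \<and> l \<le> 0
                  \<longrightarrow> 0 \<le> xi j l \<and> xi j l \<le> d"
    proof (intro allI impI)
      fix j l assume h: "1 \<le> j \<and> j \<le> m \<and> - int (m - j) \<le> l \<and> l \<le> 0"
      then have "0 \<le> xi j l \<and> xi j l \<le> d'" using box by blast
      then show "0 \<le> xi j l \<and> xi j l \<le> d" using d'(2) by linarith
    qed
    then show "0 \<le> rkP m A b i xi" using ok i unfolding gamma_ok_def by blast
  qed
qed

lemma gamma_ok_0: "gamma_ok m A b 0"
proof -
  have "rkP m A b i xi \<ge> 0" if "\<forall>j l. 1 \<le> j \<and> j \<le> m \<and> - int (m - j) \<le> l \<and> l \<le> 0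
                  \<longrightarrow> 0 \<le> xi j l \<and> xi j l \<le> 0" for xi i
  proof -
    have "rkP m A b i xi = rkP m A b i (\<lambda>_ _. 0)"
      unfolding rkP_def apply (rule iout_local) apply simp apply (intro allI impI)
      subgoal for j l using that[rule_format, of j l] by (auto simp: of_nat_diff)
      done
    also have "\<dots> \<ge> 0" unfolding rkP_def iout_G by simp
    finally show ?thesis by simp
  qed
  then show ?thesis unfolding gamma_ok_def by auto
qed

lemma rk_gamma_eq: "rk_gamma m A b = Sup (ereal ` {d. gamma_ok m A b d})"
  unfolding rk_gamma_def using gamma_ok_0 by auto

lemma rk_gamma_nonneg: "rk_gamma m A b \<ge> 0"
  unfolding rk_gamma_eq using gamma_ok_0 by (metis SUP_upper mem_Collect_eq zero_ereal_def)

lemma gamma_attained: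
  assumes r: "rk_gamma m A b = ereal r" shows "gamma_ok m A b r"
proof -
  have r0: "r \<ge> 0" using rk_gamma_nonneg[of m A b] r by simp
  have scaled: "gamma_ok m A b (c * r)" if c: "0 \<le> c" "c < 1" and rp: "r > 0" for c
  proof -
    have "c * r < 1 * r" using c rp by (intro mult_strict_right_mono) auto
    then have "ereal (c * r) < rk_gamma m A b" using r by simp
    then obtain d where d: "gamma_ok m A b d" "ereal (c * r) < ereal d"
      unfolding rk_gamma_eq less_SUP_iff by blast
    have cr: "0 \<le> c * r" using c r0 by simp
    show ?thesis using gamma_ok_mono[OF d(1) cr] d(2) by simp
  qed
  show ?thesis
  proof (cases "r = 0")
    case True then show ?thesis using gamma_ok_0 by simp
  next
    case False
    then have rp: "r > 0" using r0 by simp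
    show ?thesis unfolding gamma_ok_def
    proof (intro conjI r0 allI impI)
      fix xi i assume box: "\<forall>j l. 1 \<le> j \<and> j \<le> m \<and> - int (m - j) \<le> l \<and> l \<le> 0
                  \<longrightarrow> 0 \<le> xi j l \<and> xi j l \<le> r" and i: "i \<le> m"
      let ?f = "\<lambda>c. rkP m A b i (\<lambda>j l. c * xi j l)"
      have "(?f \<longlongrightarrow> ?f 1) (at 1)"
        using rkP_cont[where x=1 and m=m and A=A and b=b and i=i and xi=xi] unfolding isCont_def .
      then have "(?f \<longlongrightarrow> ?f 1) (at 1 within {..<1})"
        by (rule tendsto_within_subset) simp
      moreover have "eventually (\<lambda>c. 0 \<le> ?f c) (at_left 1)"
      proof -
        have "eventually (\<lambda>c. c \<in> {0<..<1}) (at_left (1::real))"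
          by (rule eventually_at_left_real) simp
        then show ?thesis
        proof (rule eventually_mono)
          fix c :: real assume c: "c \<in> {0<..<1}"
          have ok: "gamma_ok m A b (c * r)" using scaled[of c] c rp by auto
          have bx: "\<forall>j l. 1 \<le> j \<and> j \<le> m \<and> - int (m - j) \<le> l \<and> l \<le> 0
                  \<longrightarrow> 0 \<le> c * xi j l \<and> c * xi j l \<le> c * r"
          proof (intro allI impI)
            fix j l assume h: "1 \<le> j \<and> j \<le> m \<and> - int (m - j) \<le> l \<and> l \<le> 0"
            then have x: "0 \<le> xi j l" "xi j l \<le> r" using box by blast+
            have c0: "0 \<le> c" using c by simp
            show "0 \<le> c * xi j l \<and> c * xi j l \<le> c * r"
              using x c0 by (simp add: mult_left_mono)
          qed
          have "\<forall>xi. (\<forall>j l. 1 \<le> j \<and> j \<le> m \<and> - int (m - j) \<le> l \<and> l \<le> 0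
                  \<longrightarrow> 0 \<le> xi j l \<and> xi j l \<le> c * r) \<longrightarrow> (\<forall>i\<le>m. rkP m A b i xi \<ge> 0)"
            using ok unfolding gamma_ok_def by (elim conjE)
          then have "(\<forall>j l. 1 \<le> j \<and> j \<le> m \<and> - int (m - j) \<le> l \<and> l \<le> 0
                  \<longrightarrow> 0 \<le> c * xi j l \<and> c * xi j l \<le> c * r) \<longrightarrow> (\<forall>i\<le>m. rkP m A b i (\<lambda>j l. c * xi j l) \<ge> 0)"
            by (rule spec)
          then show "0 \<le> ?f c" using bx i by simp
        qed
      qed
      ultimately have "0 \<le> ?f 1" by (rule tendsto_lowerbound) simp
      then show "0 \<le> rkP m A b i xi" by simp
    qed
  qed
qed

lemma ok_of_le: assumes "0 \<le> x" "ereal x \<le> rk_gamma m A b" shows "gamma_ok m A b x"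
proof (cases "ereal x < rk_gamma m A b")
  case True
  then obtain d where d: "gamma_ok m A b d" "ereal x < ereal d"
    unfolding rk_gamma_eq less_SUP_iff by blast
  show ?thesis using gamma_ok_mono[OF d(1) assms(1)] d(2) by simp
next
  case False
  then have "rk_gamma m A b = ereal x" using assms by simp
  then show ?thesis by (rule gamma_attained)
qed

lemma rkP_nonneg:
  assumes box: "\<forall>j l. 1 \<le> j \<and> j \<le> m \<and> - int (m - j) \<le> l \<and> l \<le> 0
                  \<longrightarrow> 0 \<le> xi j l \<and> ereal (xi j l) \<le> rk_gamma m A b" and i: "i \<le> m"
  shows "0 \<le> rkP m A b i xi"
proof -
  define B where "B = {(j, l). 1 \<le> j \<and> j \<le> m \<and> - int (m - j) \<le> l \<and> l \<le> (0::int)}"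
  have "B \<subseteq> {1..m} \<times> {- int m..0}" unfolding B_def by auto
  then have fin: "finite B" by (rule finite_subset) simp
  define d where "d = Max (insert 0 ((\<lambda>(j, l). xi j l) ` B))"
  have fin2: "finite (insert 0 ((\<lambda>(j, l). xi j l) ` B))" using fin by simp
  have "d \<in> insert 0 ((\<lambda>(j, l). xi j l) ` B)" unfolding d_def using fin2 by (rule Max_in) simp
  then have "0 \<le> d \<and> ereal d \<le> rk_gamma m A b"
    using box rk_gamma_nonneg[of m A b] unfolding B_def d_def by auto (metis zero_ereal_def)
  moreover have "0 \<le> d" unfolding d_def using fin2 by simp
  ultimately have ok: "gamma_ok m A b d" by (intro ok_of_le) auto
  have "\<forall>j l. 1 \<le> j \<and> j \<le> m \<and> - int (m - j) \<le> l \<and> l \<le> 0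
                  \<longrightarrow> 0 \<le> xi j l \<and> xi j l \<le> d"
  proof (intro allI impI conjI)
    fix j l assume h: "1 \<le> j \<and> j \<le> m \<and> - int (m - j) \<le> l \<and> l \<le> 0"
    then show "0 \<le> xi j l" using box by auto
    have "(j, l) \<in> B" using h unfolding B_def by auto
    then show "xi j l \<le> d" unfolding d_def using fin2 by (intro Max_ge) auto
  qed
  then show ?thesis using ok i unfolding gamma_ok_def by blast
qed




definition ext :: "nat \<Rightarrow> real list \<Rightarrow> int \<Rightarrow> real" where
  "ext N v l = v ! nat (l mod int N)"

lemma pst_len[simp]: "length (pst m A N q dt dx t u i) = i"
  by (induction i) auto

lemma pst_prefix: "s < i \<Longrightarrow> pst m A N q dt dx t u (i + d) ! s = pst m A N q dt dx t u i ! s"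
  by (induction d) (auto simp: nth_append)

lemma pst_prefix': "s < i \<Longrightarrow> i \<le> m \<Longrightarrow> pst m A N q dt dx t u m ! s = pst m A N q dt dx t u i ! s"
  using pst_prefix[of s i m A N q dt dx t u "m - i"] by simp

lemma pst_elen: "s < i \<Longrightarrow> length (pst m A N q dt dx t u i ! s) = N"
proof (induction i)
  case 0 then show ?case by simp
next
  case (Suc i) then show ?case by (cases "s < i") (auto simp: nth_append)
qed

definition XiP where
  "XiP m A N q dt dx t u = (\<lambda>j l. dt / dx * q (nat (l mod int N)) (pst m A N q dt dx t u m ! (j-1)) (t + rk_node m A j * dt))"

lemma pred_ext: "N \<ge> 1 \<Longrightarrow> nat ((l - 1) mod int N) = pred_idx N (nat (l mod int N))"
proof -
  assume N: "N \<ge> 1"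
  have e: "(l - 1) mod int N = (l mod int N - 1) mod int N" by (simp add: mod_diff_left_eq)
  have b: "0 \<le> l mod int N" "l mod int N < int N" using N by auto
  show ?thesis
  proof (cases "l mod int N = 0")
    case True
    have "(-1::int) mod int N = (int N - 1) mod int N" using mod_add_self2[of "-1" "int N"] by simp
    also have "\<dots> = int N - 1" using N by (intro mod_pos_pos_trivial) auto
    finally have "(-1::int) mod int N = int N - 1" .
    then show ?thesis using True e N by (simp add: pred_idx_def nat_diff_distrib)
  next
    case False
    then have "(l mod int N - 1) mod int N = l mod int N - 1" using b by (intro mod_pos_pos_trivial) auto
    then show ?thesis using False e b by (simp add: pred_idx_def nat_diff_distrib)
  qed
qed

lemma ext_idx: "N \<ge> 1 \<Longrightarrow> nat (l mod int N) < N"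
  by (metis Euclidean_Rings.pos_mod_bound Euclidean_Rings.pos_mod_sign nat_less_iff of_nat_0_less_iff zero_less_iff_neq_zero
        not_one_le_zero)

lemma pst_G: "N \<ge> 1 \<Longrightarrow> s < m \<Longrightarrow>
  ext N (pst m A N q dt dx t u m ! s) l = G A (XiP m A N q dt dx t u) (ext N u) s l"
proof (induction s arbitrary: l rule: less_induct)
  case (less s)
  let ?P = "pst m A N q dt dx t u"
  let ?X = "XiP m A N q dt dx t u"
  define k where "k = nat (l mod int N)"
  have k: "k < N" unfolding k_def using less.prems(1) by (rule ext_idx)
  have e1: "?P m ! s = ?P (Suc s) ! s" using less.prems by (intro pst_prefix') auto
  have "ext N (?P m ! s) l = u ! k + (\<Sum>j\<in>{1..s}. A (Suc s) j *
            (dt / dx * q k (?P s ! (j-1)) (t + rk_node m A j * dt)) *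
            (?P s ! (j-1) ! pred_idx N k - ?P s ! (j-1) ! k))"
    unfolding ext_def e1 k_def[symmetric] using k by (simp add: nth_append)
  also have "\<dots> = ext N u l + (\<Sum>j\<in>{1..s}. A (Suc s) j * ?X j l *
          (G A ?X (ext N u) (j-1) (l-1) - G A ?X (ext N u) (j-1) l))"
  proof (intro arg_cong2[where f="(+)"] sum.cong refl)
    show "u ! k = ext N u l" unfolding ext_def k_def ..
  next
    fix j assume j: "j \<in> {1..s}"
    have pe: "?P s ! (j-1) = ?P m ! (j-1)" using j less.prems by (intro pst_prefix'[symmetric]) auto
    have g1: "?P m ! (j-1) ! k = G A ?X (ext N u) (j-1) l"
      using less.IH[of "j-1" l] j less.prems unfolding ext_def k_def by auto
    have g2: "?P m ! (j-1) ! pred_idx N k = G A ?X (ext N u) (j-1) (l-1)"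
      using less.IH[of "j-1" "l-1"] j less.prems pred_ext[of N l] unfolding ext_def k_def by auto
    show "A (Suc s) j * (dt / dx * q k (?P s ! (j-1)) (t + rk_node m A j * dt)) *
            (?P s ! (j-1) ! pred_idx N k - ?P s ! (j-1) ! k) =
          A (Suc s) j * ?X j l * (G A ?X (ext N u) (j-1) (l-1) - G A ?X (ext N u) (j-1) l)"
      unfolding pe g1 g2 by (simp add: XiP_def k_def[symmetric])
  qed
  also have "\<dots> = G A ?X (ext N u) s l" by (rule G_rec[symmetric])
  finally show ?case .
qed

lemma step_len[simp]: "length (rk_step m A b N q dt dx t u) = N"
  by (simp add: rk_step_def Let_def)

lemma step_ext: "N \<ge> 1 \<Longrightarrow>
  ext N (rk_step m A b N q dt dx t u) l = iout m A b (XiP m A N q dt dx t u) (ext N u) l"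
proof -
  assume N: "N \<ge> 1"
  let ?P = "pst m A N q dt dx t u"
  let ?X = "XiP m A N q dt dx t u"
  define k where "k = nat (l mod int N)"
  have k: "k < N" unfolding k_def using N by (rule ext_idx)
  have "ext N (rk_step m A b N q dt dx t u) l = u ! k + (\<Sum>i\<in>{1..m}. b i *
            (dt / dx * q k (?P m ! (i-1)) (t + rk_node m A i * dt)) *
            (?P m ! (i-1) ! pred_idx N k - ?P m ! (i-1) ! k))"
    unfolding ext_def k_def[symmetric] rk_step_def Let_def using k by simp
  also have "\<dots> = ext N u l + (\<Sum>i\<in>{1..m}. b i * ?X i l *
          (G A ?X (ext N u) (i-1) (l-1) - G A ?X (ext N u) (i-1) l))"
  proof (intro arg_cong2[where f="(+)"] sum.cong refl)
    show "u ! k = ext N u l" unfolding ext_def k_def ..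
  next
    fix j assume j: "j \<in> {1..m}"
    have g1: "?P m ! (j-1) ! k = G A ?X (ext N u) (j-1) l"
      using pst_G[of N "j-1" m A q dt dx t u l] j N unfolding ext_def k_def by auto
    have g2: "?P m ! (j-1) ! pred_idx N k = G A ?X (ext N u) (j-1) (l-1)"
      using pst_G[of N "j-1" m A q dt dx t u "l-1"] j N pred_ext[of N l] unfolding ext_def k_def by auto
    show "b j * (dt / dx * q k (?P m ! (j-1)) (t + rk_node m A j * dt)) *
            (?P m ! (j-1) ! pred_idx N k - ?P m ! (j-1) ! k) =
          b j * ?X j l * (G A ?X (ext N u) (j-1) (l-1) - G A ?X (ext N u) (j-1) l)"
      unfolding g1 g2 by (simp add: XiP_def k_def[symmetric])
  qed
  also have "\<dots> = iout m A b ?X (ext N u) l" by (rule iout_G[symmetric])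
  finally show ?thesis .
qed

lemma step_nonneg:
  assumes adm: "admissible N q dt dx (rk_gamma m A b)" and len: "length u = N"
    and nn: "\<forall>k<N. u ! k \<ge> 0" and kN: "k < N"
  shows "rk_step m A b N q dt dx t u ! k \<ge> 0"
proof -
  let ?X = "XiP m A N q dt dx t u"
  have N: "N \<ge> 1" using adm unfolding admissible_def by simp
  have "rk_step m A b N q dt dx t u ! k = ext N (rk_step m A b N q dt dx t u) (int k)"
    unfolding ext_def using kN by simp
  also have "\<dots> = (\<Sum>p\<in>{0..m}. ext N u (int k - int p) * rkP m A b p (\<lambda>j l. ?X j (l + int k)))"
    unfolding step_ext[OF N] iout_decomp ..
  also have "\<dots> \<ge> 0"
  proof (intro sum_nonneg mult_nonneg_nonneg)
    fix p assume p: "p \<in> {0..m}"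
    show "0 \<le> ext N u (int k - int p)" unfolding ext_def using nn ext_idx[OF N] by auto
    show "0 \<le> rkP m A b p (\<lambda>j l. ?X j (l + int k))"
    proof (rule rkP_nonneg)
      show "p \<le> m" using p by simp
      show "\<forall>j l. 1 \<le> j \<and> j \<le> m \<and> - int (m - j) \<le> l \<and> l \<le> 0 \<longrightarrow>
          0 \<le> ?X j (l + int k) \<and> ereal (?X j (l + int k)) \<le> rk_gamma m A b"
      proof (intro allI impI)
        fix j l assume h: "1 \<le> j \<and> j \<le> m \<and> - int (m - j) \<le> l \<and> l \<le> 0"
        have vl: "length (pst m A N q dt dx t u m ! (j-1)) = N" using h by (intro pst_elen) auto
        have "nat ((l + int k) mod int N) < N" by (rule ext_idx[OF N])
        then show "0 \<le> ?X j (l + int k) \<and> ereal (?X j (l + int k)) \<le> rk_gamma m A b"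
          using adm vl unfolding admissible_def XiP_def by (auto simp: mult.commute)
      qed
    qed
  qed
  finally show ?thesis .
qed

lemma sol_nonneg:
  assumes adm: "admissible N q dt dx (rk_gamma m A b)" and len: "length u0 = N"
    and nn: "\<forall>k<N. u0 ! k \<ge> 0"
  shows "length (rk_sol m A b N q dt dx u0 n) = N \<and> (\<forall>k<N. rk_sol m A b N q dt dx u0 n ! k \<ge> 0)"
proof (induction n)
  case 0 then show ?case using len nn by simp
next
  case (Suc n) then show ?case using step_nonneg[OF adm] by simp
qed




lemma part2:
  assumes nc: "non_confluent m A" and gt: "ereal g > rk_gamma m A b"
  shows "\<exists>N q dt dx u0. admissible N q dt dx (ereal g) \<and>
               length u0 = N \<and> (\<forall>k<N. u0 ! k \<ge> 0) \<and>
               (\<exists>n. \<exists>k<N. rk_sol m A b N q dt dx u0 n ! k < 0)"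
proof -
  have g0: "g > 0" using gt rk_gamma_nonneg[of m A b] by (metis ereal_less(2) order_le_less_trans)
  have "\<not> gamma_ok m A b g"
  proof
    assume "gamma_ok m A b g"
    then have "ereal g \<le> rk_gamma m A b" unfolding rk_gamma_eq by (intro SUP_upper) auto
    then show False using gt by simp
  qed
  then obtain xi i where box: "\<forall>j l. 1 \<le> j \<and> j \<le> m \<and> - int (m - j) \<le> l \<and> l \<le> 0
                  \<longrightarrow> 0 \<le> xi j l \<and> xi j l \<le> g" and i: "i \<le> m" and neg: "rkP m A b i xi < 0"
    using g0 unfolding gamma_ok_def by force
  define c where "c = rk_node m A"
  define N where "N = Suc m"
  define q where "q = (\<lambda>(k::nat) (v::real list) (t::real). max 0 (min g
      (if \<exists>j\<in>{1..m}. c j = t then xi (THE j. j\<in>{1..m} \<and> c j = t) (int k - int m) else 0)))"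
  define u0 where "u0 = map (\<lambda>k. if k = m - i then (1::real) else 0) [0..<N]"
  have N1: "N \<ge> 1" unfolding N_def by simp
  have adm: "admissible N q 1 1 (ereal g)"
    unfolding admissible_def q_def using N1 g0 by auto
  have len: "length u0 = N" unfolding u0_def by simp
  have nn: "\<forall>k<N. u0 ! k \<ge> 0" unfolding u0_def by simp
  let ?X = "XiP m A N q 1 1 0 u0"
  have "rk_sol m A b N q 1 1 u0 1 ! m = rk_step m A b N q 1 1 0 u0 ! m" by simp
  also have "\<dots> = ext N (rk_step m A b N q 1 1 0 u0) (int m)"
    unfolding ext_def N_def by simp
  also have "\<dots> = (\<Sum>p\<in>{0..m}. ext N u0 (int m - int p) * rkP m A b p (\<lambda>j l. ?X j (l + int m)))"
    unfolding step_ext[OF N1] iout_decomp ..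
  also have "\<dots> = (\<Sum>p\<in>{0..m}. if p = i then rkP m A b p (\<lambda>j l. ?X j (l + int m)) else 0)"
  proof (intro sum.cong refl)
    fix p assume p: "p \<in> {0..m}"
    have "(int m - int p) mod int N = int (m - p)" unfolding N_def using p by auto
    have u: "u0 ! (m - p) = (if m - p = m - i then 1 else 0)"
      unfolding u0_def using p by (simp add: N_def del: upt_Suc)
    have "ext N u0 (int m - int p) = u0 ! (m - p)"
      unfolding ext_def \<open>(int m - int p) mod int N = int (m - p)\<close> by simp
    also have "\<dots> = (if p = i then 1 else 0)" using u p i by auto
    finally have "ext N u0 (int m - int p) = (if p = i then 1 else 0)" .
    then show "ext N u0 (int m - int p) * rkP m A b p (\<lambda>j l. ?X j (l + int m)) =
       (if p = i then rkP m A b p (\<lambda>j l. ?X j (l + int m)) else 0)" by simp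
  qed
  also have "\<dots> = rkP m A b i (\<lambda>j l. ?X j (l + int m))" using i by (simp add: sum.delta)
  also have "\<dots> = rkP m A b i xi"
    unfolding rkP_def
  proof (rule iout_local)
    show "\<forall>j l. 1 \<le> j \<and> j \<le> m \<and> 0 - int (m - j) \<le> l \<and> l \<le> 0 \<longrightarrow> ?X j (l + int m) = xi j l"
    proof (intro allI impI)
      fix j l assume h: "1 \<le> j \<and> j \<le> m \<and> 0 - int (m - j) \<le> l \<and> l \<le> 0"
      have md: "(l + int m) mod int N = l + int m" unfolding N_def using h by (intro mod_pos_pos_trivial) auto
      have th: "(THE j'. j' \<in> {1..m} \<and> c j' = c j) = j"
      proof (rule the_equality)
        show "j \<in> {1..m} \<and> c j = c j" using h by simp
        fix j' assume j': "j' \<in> {1..m} \<and> c j' = c j"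
        have inj: "inj_on c {1..m}" using nc unfolding non_confluent_def c_def .
        have jm: "j \<in> {1..m}" using h by simp
        show "j' = j" using inj_onD[OF inj _ _ jm] j' by blast
      qed
      have ex: "\<exists>j'\<in>{1..m}. c j' = c j" using h by auto
      have lm: "0 \<le> l + int m" using h by auto
      have "0 \<le> xi j l \<and> xi j l \<le> g" using box h by auto
      then show "?X j (l + int m) = xi j l"
        unfolding XiP_def md using h th ex lm by (simp add: q_def c_def[symmetric])
    qed
  qed simp
  finally have "rk_sol m A b N q 1 1 u0 1 ! m < 0" using neg by simp
  then show ?thesis using adm len nn unfolding N_def by blast
qed

theorem corollary1:
  fixes m :: nat and A :: "nat \<Rightarrow> nat \<Rightarrow> real" and b :: "nat \<Rightarrow> real"
  assumes "m \<ge> 1" and "explicit_rk m A" and "non_confluent m A"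
  shows "(\<forall>N q dt dx u0. admissible N q dt dx (rk_gamma m A b) \<longrightarrow>
            length u0 = N \<longrightarrow> (\<forall>k<N. u0 ! k \<ge> 0) \<longrightarrow>
            (\<forall>n. \<forall>k<N. rk_sol m A b N q dt dx u0 n ! k \<ge> 0))
       \<and> (\<forall>g::real. ereal g > rk_gamma m A b \<longrightarrow>
            (\<exists>N q dt dx u0. admissible N q dt dx (ereal g) \<and>
               length u0 = N \<and> (\<forall>k<N. u0 ! k \<ge> 0) \<and>
               (\<exists>n. \<exists>k<N. rk_sol m A b N q dt dx u0 n ! k < 0)))"
proof (intro conjI allI impI)
  fix N q dt dx u0 n k
  assume "admissible N q dt dx (rk_gamma m A b)" "length u0 = N" "\<forall>k<N. (u0::real list) ! k \<ge> 0" "k < N"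
  then show "rk_sol m A b N q dt dx u0 n ! k \<ge> 0" using sol_nonneg by blast
next
  fix g :: real assume "ereal g > rk_gamma m A b"
  then show "\<exists>N q dt dx u0. admissible N q dt dx (ereal g) \<and>
               length u0 = N \<and> (\<forall>k<N. u0 ! k \<ge> 0) \<and>
               (\<exists>n. \<exists>k<N. rk_sol m A b N q dt dx u0 n ! k < 0)"
    by (rule part2[OF assms(3)])
qed


end
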